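(* For all $n\ge1$, $$q_n=\frac12nH_n-\frac12P_n,\qquad r_n=\frac12nP_n-\frac12P_n=\frac{n-1}{2}P_n.$$
   Context: Let $s=\sqrt3/2$. Consider the standard triangular lattice in the plane whose vertices are the points $(a+b/2,\,bs)$ with $a,b\in\mathbb Z$ and whose edges are the unit segments joining lattice points in the directions $0^\circ,60^\circ,120^\circ$; it divides the plane into unit equilateral triangles called cells. A small tile is a single cell; a large tile is an equilateral triangle of side $2$ whose vertices are lattice points (so it is a union of $4$ cells; it may point up or down). For a region $R$ that is a finite union of cells, a tiling of $R$ is a finite set of small and large tiles, each contained in $R$, with pairwise disjoint interiors and union equal to $R$. For $n\ge1$, the region $H_n$ is the union of the trapezoid with vertices $(0,0),(n,0),(n-\tfrac12,s),(\tfrac12,s)$ and the trapezoid with vertices $(\tfrac12,s),(n-\tfrac12,s),(n,2s),(0,2s)$ ($4n-2$ cells; for $n=1$ two unit triangles meeting at a point), and $P_n$ is $H_n$ with the cell with vertices $(n-1,0),(n,0),(n-\tfrac12,s)$ removed. $H_n$ and $P_n$ also denote the numbers of tilings of these regions; thus $H_n=\frac{(1+\sqrt2)^n+(1-\sqrt2)^n}{2}$ and $P_n=\frac{(1+\sqrt2)^n-(1-\sqrt2)^n}{2\sqrt2}$. Define $q_n$ (resp. $r_n$) as the sum, over all tilings of $H_n$ (resp. $P_n$), of the number of large tiles in the tiling. *)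

theory Defs
  imports Complex_Main
begin

text \<open>Lattice coordinates: the lattice point (a,b) is the planar point (a + b/2, b*sqrt 3/2).
  Cells are encoded combinatorially:
  Up a b   = triangle with lattice vertices (a,b), (a+1,b), (a,b+1);
  Down a b = triangle with lattice vertices (a+1,b), (a,b+1), (a+1,b+1).
  Every cell of the triangular lattice is exactly one of these.
  A region (finite union of cells) is represented by its finite set of cells; a tile by the
  set of cells it consists of. Two tiles have disjoint interiors iff their cell sets are disjoint.\<close>

datatype cell = Up int int | Down int int

definition small_tile :: "cell set \<Rightarrow> bool" where
  "small_tile t \<longleftrightarrow> (\<exists>c. t = {c})"

text \<open>Large upward tile with lattice vertices (a,b),(a+2,b),(a,b+2).\<close>
definition large_up :: "int \<Rightarrow> int \<Rightarrow> cell set" where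
  "large_up a b = {Up a b, Up (a+1) b, Up a (b+1), Down a b}"

text \<open>Large downward tile with lattice vertices (a+2,b),(a,b+2),(a+2,b+2).\<close>
definition large_down :: "int \<Rightarrow> int \<Rightarrow> cell set" where
  "large_down a b = {Down (a+1) b, Down a (b+1), Down (a+1) (b+1), Up (a+1) (b+1)}"

definition large_tile :: "cell set \<Rightarrow> bool" where
  "large_tile t \<longleftrightarrow> (\<exists>a b. t = large_up a b \<or> t = large_down a b)"

definition is_tiling :: "cell set \<Rightarrow> cell set set \<Rightarrow> bool" where
  "is_tiling R T \<longleftrightarrow> finite T \<and>
     (\<forall>t\<in>T. (small_tile t \<or> large_tile t) \<and> t \<subseteq> R) \<and>
     pairwise disjnt T \<and> \<Union>T = R"

definition tilings :: "cell set \<Rightarrow> cell set set set" where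
  "tilings R = {T. is_tiling R T}"

definition num_tilings :: "cell set \<Rightarrow> nat" where
  "num_tilings R = card (tilings R)"

definition num_large :: "cell set set \<Rightarrow> nat" where
  "num_large T = card {t\<in>T. large_tile t}"

definition total_large :: "cell set \<Rightarrow> nat" where
  "total_large R = (\<Sum>T\<in>tilings R. num_large T)"

text \<open>The region H_n: bottom row (trapezoid (0,0),(n,0),(n-1/2,s),(1/2,s)) consists of
  Up a 0 (0 \<le> a \<le> n-1) and Down a 0 (0 \<le> a \<le> n-2); top row
  (trapezoid (1/2,s),(n-1/2,s),(n,2s),(0,2s)) consists of Up a 1 (0 \<le> a \<le> n-2) and
  Down a 1 (-1 \<le> a \<le> n-2).\<close>
definition H_region :: "nat \<Rightarrow> cell set" where
  "H_region n =
     {Up a 0 | a. 0 \<le> a \<and> a \<le> int n - 1} \<union> {Down a 0 | a. 0 \<le> a \<and> a \<le> int n - 2} \<union>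
     {Up a 1 | a. 0 \<le> a \<and> a \<le> int n - 2} \<union> {Down a 1 | a. -1 \<le> a \<and> a \<le> int n - 2}"

text \<open>P_n: H_n minus the cell with vertices (n-1,0),(n,0),(n-1/2,s), i.e. Up (n-1) 0.\<close>
definition P_region :: "nat \<Rightarrow> cell set" where
  "P_region n = H_region n - {Up (int n - 1) 0}"

definition H :: "nat \<Rightarrow> nat" where "H n = num_tilings (H_region n)"
definition P :: "nat \<Rightarrow> nat" where "P n = num_tilings (P_region n)"
definition q :: "nat \<Rightarrow> nat" where "q n = total_large (H_region n)"
definition r :: "nat \<Rightarrow> nat" where "r n = total_large (P_region n)"

end

theory Submission
  imports Defs
begin


definition Fam :: "cell set \<Rightarrow> cell set set set" where
  "Fam R = {L. L \<subseteq> {t. large_tile t \<and> t \<subseteq> R} \<and> pairwise disjnt L}"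

lemma large_not_small: "large_tile t \<Longrightarrow> \<not> small_tile t"
  unfolding large_tile_def small_tile_def large_up_def large_down_def
  by (auto simp: insert_eq_iff)

lemma fam_bij:
  assumes "finite R"
  shows "bij_betw (\<lambda>T. {t\<in>T. large_tile t}) (tilings R) (Fam R)"
proof (rule bij_betw_byWitness[where f' = "\<lambda>L. L \<union> (\<lambda>c. {c}) ` (R - \<Union>L)"])
  show "\<forall>T\<in>tilings R. {t\<in>T. large_tile t} \<union> (\<lambda>c. {c}) ` (R - \<Union>{t\<in>T. large_tile t}) = T"
  proof
    fix T assume "T \<in> tilings R"
    hence T: "finite T" "\<And>t. t\<in>T \<Longrightarrow> (small_tile t \<or> large_tile t) \<and> t \<subseteq> R"
      "pairwise disjnt T" "\<Union>T = R" by (auto simp: tilings_def is_tiling_def)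
    show "{t\<in>T. large_tile t} \<union> (\<lambda>c. {c}) ` (R - \<Union>{t\<in>T. large_tile t}) = T"
    proof (intro equalityI subsetI)
      fix t assume "t \<in> T"
      show "t \<in> {t\<in>T. large_tile t} \<union> (\<lambda>c. {c}) ` (R - \<Union>{t\<in>T. large_tile t})"
      proof (cases "large_tile t")
        case True with \<open>t\<in>T\<close> show ?thesis by auto
      next
        case False
        with T(2)[OF \<open>t\<in>T\<close>] obtain c where c: "t = {c}" "c \<in> R" by (auto simp: small_tile_def)
        have "c \<notin> \<Union>{t\<in>T. large_tile t}"
        proof
          assume "c \<in> \<Union>{t\<in>T. large_tile t}"
          then obtain l where l: "l \<in> T" "large_tile l" "c \<in> l" by auto
          with False have "l \<noteq> t" by auto
          with T(3) l \<open>t\<in>T\<close> have "disjnt l t" by (auto simp: pairwise_def)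
          with l c show False by (auto simp: disjnt_def)
        qed
        with c show ?thesis by auto
      qed
    next
      fix t assume t: "t \<in> {t\<in>T. large_tile t} \<union> (\<lambda>c. {c}) ` (R - \<Union>{t\<in>T. large_tile t})"
      show "t \<in> T"
      proof (cases "t \<in> {t\<in>T. large_tile t}")
        case True thus ?thesis by auto
      next
        case False
        with t obtain c where c: "t = {c}" "c \<in> R" "c \<notin> \<Union>{t\<in>T. large_tile t}" by auto
        with T(4) obtain s where s: "s \<in> T" "c \<in> s" by auto
        with c have "\<not> large_tile s" by auto
        with T(2)[OF s(1)] s(2) have "s = {c}" by (auto simp: small_tile_def)
        with s c show ?thesis by auto
      qed
    qed
  qed
  show "\<forall>L\<in>Fam R. {t \<in> L \<union> (\<lambda>c. {c}) ` (R - \<Union>L). large_tile t} = L"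
    using large_not_small by (auto simp: Fam_def small_tile_def)
  show "(\<lambda>T. {t\<in>T. large_tile t}) ` tilings R \<subseteq> Fam R"
    by (auto simp: Fam_def tilings_def is_tiling_def pairwise_def)
  show "(\<lambda>L. L \<union> (\<lambda>c. {c}) ` (R - \<Union>L)) ` Fam R \<subseteq> tilings R"
  proof
    fix T assume "T \<in> (\<lambda>L. L \<union> (\<lambda>c. {c}) ` (R - \<Union>L)) ` Fam R"
    then obtain L where L: "L \<in> Fam R" and T: "T = L \<union> (\<lambda>c. {c}) ` (R - \<Union>L)" by auto
    have Lsub: "L \<subseteq> Pow R" and Ll: "\<And>t. t\<in>L \<Longrightarrow> large_tile t" and Lp: "pairwise disjnt L"
      using L by (auto simp: Fam_def)
    have "finite L" using Lsub assms by (meson finite_Pow_iff finite_subset)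
    hence "finite T" using T assms by auto
    moreover have "pairwise disjnt T"
      unfolding T pairwise_def using Lp by (auto simp: pairwise_def disjnt_def)
    moreover have "\<forall>t\<in>T. (small_tile t \<or> large_tile t) \<and> t \<subseteq> R"
      using T Lsub Ll by (auto simp: small_tile_def)
    moreover have "\<Union>T = R" using T Lsub by auto
    ultimately show "T \<in> tilings R" by (auto simp: tilings_def is_tiling_def)
  qed
qed

lemma fam_counts:
  assumes "finite R"
  shows "num_tilings R = card (Fam R)" "total_large R = (\<Sum>L\<in>Fam R. card L)"
proof -
  note b = fam_bij[OF assms]
  show "num_tilings R = card (Fam R)" using bij_betw_same_card[OF b] by (simp add: num_tilings_def)
  have "total_large R = (\<Sum>T\<in>tilings R. card {t\<in>T. large_tile t})"
    by (simp add: total_large_def num_large_def)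
  also have "\<dots> = (\<Sum>L\<in>Fam R. card L)" using sum.reindex_bij_betw[OF b, of card] by simp
  finally show "total_large R = (\<Sum>L\<in>Fam R. card L)" .
qed



definition LU :: "nat \<Rightarrow> cell set" where "LU a = large_up (int a) 0"
definition LD :: "nat \<Rightarrow> cell set" where "LD a = large_down (int a - 1) 0"
definition C :: "nat \<Rightarrow> cell set set" where "C m = LU ` {..<m} \<union> LD ` {..<m}"

lemma LU_ne_LD[simp]: "LU a \<noteq> LD b" "LD b \<noteq> LU a"
proof -
  have "Up (int a) 0 \<in> LU a" "Up (int a) 0 \<notin> LD b"
    by (auto simp: LU_def LD_def large_up_def large_down_def)
  thus "LU a \<noteq> LD b" "LD b \<noteq> LU a" by metis+
qed
lemma LU_inj[simp]: "LU a = LU b \<longleftrightarrow> a = b"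
  by (auto simp: LU_def large_up_def)
lemma LD_inj[simp]: "LD a = LD b \<longleftrightarrow> a = b"
  by (auto simp: LD_def large_down_def)
lemma disj_UU: "disjnt (LU a) (LU b) \<longleftrightarrow> a \<noteq> b \<and> a \<noteq> Suc b \<and> b \<noteq> Suc a"
  by (simp add: LU_def LD_def large_up_def large_down_def del: disjnt_insert2) arith+
lemma disj_DD: "disjnt (LD a) (LD b) \<longleftrightarrow> a \<noteq> b \<and> a \<noteq> Suc b \<and> b \<noteq> Suc a"
  by (simp add: LU_def LD_def large_up_def large_down_def del: disjnt_insert2) arith+
lemma disj_UD: "disjnt (LU a) (LD b) \<longleftrightarrow> a \<noteq> b"
  by (simp add: LU_def LD_def large_up_def large_down_def del: disjnt_insert2)
lemma disj_DU: "disjnt (LD b) (LU a) \<longleftrightarrow> a \<noteq> b"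
  using disj_UD disjnt_sym by metis


lemma memH: "c \<in> H_region n \<longleftrightarrow> (case c of
   Up a b \<Rightarrow> (b = 0 \<and> 0 \<le> a \<and> a \<le> int n - 1) \<or> (b = 1 \<and> 0 \<le> a \<and> a \<le> int n - 2)
 | Down a b \<Rightarrow> (b = 0 \<and> 0 \<le> a \<and> a \<le> int n - 2) \<or> (b = 1 \<and> -1 \<le> a \<and> a \<le> int n - 2))"
  by (cases c) (auto simp: H_region_def)

lemma large_H: "(large_tile t \<and> t \<subseteq> H_region (Suc m)) \<longleftrightarrow> t \<in> C m"
proof
  assume "large_tile t \<and> t \<subseteq> H_region (Suc m)"
  then obtain a b where t: "t = large_up a b \<or> t = large_down a b" and s: "t \<subseteq> H_region (Suc m)"
    by (auto simp: large_tile_def)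
  from t show "t \<in> C m"
  proof
    assume t: "t = large_up a b"
    with s have "b = 0" "0 \<le> a" "a < int m" by (auto simp: large_up_def memH)
    hence "t = LU (nat a)" "nat a < m" using t by (auto simp: LU_def)
    thus ?thesis by (auto simp: C_def)
  next
    assume t: "t = large_down a b"
    with s have "b = 0" "0 \<le> a + 1" "a + 1 < int m" by (auto simp: large_down_def memH)
    hence "t = LD (nat (a+1))" "nat (a+1) < m" using t by (auto simp: LD_def)
    thus ?thesis by (auto simp: C_def)
  qed
next
  assume "t \<in> C m"
  then obtain x where x: "x < m" "t = LU x \<or> t = LD x" by (auto simp: C_def)
  from x(2) show "large_tile t \<and> t \<subseteq> H_region (Suc m)"
  proof
    assume t: "t = LU x"
    have "large_tile t" unfolding t LU_def large_tile_def by blast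
    moreover have "t \<subseteq> H_region (Suc m)" unfolding t LU_def large_up_def using x(1)
      by (simp add: memH)
    ultimately show ?thesis by blast
  next
    assume t: "t = LD x"
    have "large_tile t" unfolding t LD_def large_tile_def by blast
    moreover have "t \<subseteq> H_region (Suc m)" unfolding t LD_def large_down_def using x(1)
      by (simp add: memH)
    ultimately show ?thesis by blast
  qed
qed

lemma large_P: "(large_tile t \<and> t \<subseteq> P_region (Suc m)) \<longleftrightarrow> t \<in> C m \<and> (\<forall>k. m = Suc k \<longrightarrow> t \<noteq> LU k)"
proof -
  have "(large_tile t \<and> t \<subseteq> P_region (Suc m)) \<longleftrightarrow> t \<in> C m \<and> Up (int m) 0 \<notin> t"
    using large_H[of t m] by (auto simp: P_region_def)
  also have "\<dots> \<longleftrightarrow> t \<in> C m \<and> (\<forall>k. m = Suc k \<longrightarrow> t \<noteq> LU k)"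
  proof (cases "t \<in> C m")
    case True
    then obtain x where x: "x < m" "t = LU x \<or> t = LD x" by (auto simp: C_def)
    from x(2) show ?thesis
    proof
      assume t: "t = LU x"
      have "Up (int m) 0 \<in> t \<longleftrightarrow> m = Suc x" unfolding t LU_def large_up_def using x(1) by auto
      thus ?thesis using True t by auto
    next
      assume t: "t = LD x"
      have "Up (int m) 0 \<notin> t" unfolding t LD_def large_down_def by auto
      thus ?thesis using True t by auto
    qed
  qed simp
  finally show ?thesis .
qed

lemma finH: "finite (H_region n)"
proof -
  have "H_region n \<subseteq> (\<lambda>a. Up a 0) ` {0..int n} \<union> (\<lambda>a. Down a 0) ` {0..int n}
     \<union> (\<lambda>a. Up a 1) ` {0..int n} \<union> (\<lambda>a. Down a 1) ` {-1..int n}"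
    by (auto simp: H_region_def)
  thus ?thesis by (rule finite_subset) auto
qed




definition TT :: "nat \<Rightarrow> cell set set set" where
  "TT m = {L. L \<subseteq> C m \<and> pairwise disjnt L}"
definition endU :: "nat \<Rightarrow> cell set set \<Rightarrow> bool" where
  "endU m L \<longleftrightarrow> (\<exists>k. m = Suc k \<and> LU k \<in> L)"
definition endD :: "nat \<Rightarrow> cell set set \<Rightarrow> bool" where
  "endD m L \<longleftrightarrow> (\<exists>k. m = Suc k \<and> LD k \<in> L)"

lemma C_Suc: "C (Suc m) = insert (LU m) (insert (LD m) (C m))"
  by (auto simp: C_def lessThan_Suc)
lemma LU_notin_C: "LU m \<notin> C m" and LD_notin_C: "LD m \<notin> C m"
  by (auto simp: C_def)
lemma finite_C: "finite (C m)" by (simp add: C_def)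
lemma finite_TT: "finite (TT m)"
  by (rule finite_subset[of _ "Pow (C m)"]) (auto simp: TT_def finite_C)
lemma TT_finite_mem: "L \<in> TT m \<Longrightarrow> finite L"
  using finite_C by (auto simp: TT_def intro: finite_subset)

lemma disjU_all: "L \<subseteq> C m \<Longrightarrow> (\<forall>y\<in>L. disjnt (LU m) y) \<longleftrightarrow> \<not> endU m L"
proof
  assume "\<forall>y\<in>L. disjnt (LU m) y"
  thus "\<not> endU m L" unfolding endU_def by (auto simp: disj_UU)
next
  assume L: "L \<subseteq> C m" and n: "\<not> endU m L"
  show "\<forall>y\<in>L. disjnt (LU m) y"
  proof
    fix y assume "y \<in> L"
    with L obtain a where a: "a < m" "y = LU a \<or> y = LD a" by (auto simp: C_def)
    from a(2) show "disjnt (LU m) y"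
    proof
      assume y: "y = LU a"
      have "Suc a \<noteq> m" using n \<open>y\<in>L\<close> y unfolding endU_def by auto
      thus ?thesis using y a(1) by (simp add: disj_UU)
    qed (use a in \<open>simp add: disj_UD\<close>)
  qed
qed

lemma disjD_all: "L \<subseteq> C m \<Longrightarrow> (\<forall>y\<in>L. disjnt (LD m) y) \<longleftrightarrow> \<not> endD m L"
proof
  assume "\<forall>y\<in>L. disjnt (LD m) y"
  thus "\<not> endD m L" unfolding endD_def by (auto simp: disj_DD)
next
  assume L: "L \<subseteq> C m" and n: "\<not> endD m L"
  show "\<forall>y\<in>L. disjnt (LD m) y"
  proof
    fix y assume "y \<in> L"
    with L obtain a where a: "a < m" "y = LU a \<or> y = LD a" by (auto simp: C_def)
    from a(2) show "disjnt (LD m) y"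
    proof
      assume y: "y = LD a"
      have "Suc a \<noteq> m" using n \<open>y\<in>L\<close> y unfolding endD_def by auto
      thus ?thesis using y a(1) by (simp add: disj_DD)
    qed (use a in \<open>simp add: disj_DU\<close>)
  qed
qed


lemma TT_Suc: "TT (Suc m) = TT m \<union> insert (LU m) ` {L\<in>TT m. \<not> endU m L}
   \<union> insert (LD m) ` {L\<in>TT m. \<not> endD m L}" (is "_ = ?R")
proof (intro equalityI subsetI)
  fix L assume "L \<in> TT (Suc m)"
  hence L: "L \<subseteq> insert (LU m) (insert (LD m) (C m))" and p: "pairwise disjnt L"
    by (auto simp: TT_def C_Suc)
  show "L \<in> ?R"
  proof (cases "LU m \<in> L")
    case True
    have "LD m \<notin> L"
    proof
      assume "LD m \<in> L"
      with True p have "disjnt (LU m) (LD m)" by (auto simp: pairwise_def)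
      thus False by (simp add: disj_UD)
    qed
    define L' where "L' = L - {LU m}"
    have L'C: "L' \<subseteq> C m" using L \<open>LD m \<notin> L\<close> by (auto simp: L'_def)
    have pL': "pairwise disjnt L'" using p by (auto simp: L'_def intro: pairwise_subset)
    have "\<forall>y\<in>L'. disjnt (LU m) y" using p True by (auto simp: L'_def pairwise_def)
    hence "\<not> endU m L'" using disjU_all[OF L'C] by simp
    moreover have "L = insert (LU m) L'" using True by (auto simp: L'_def)
    ultimately show ?thesis using L'C pL' by (auto simp: TT_def)
  next
    case F: False
    show ?thesis
    proof (cases "LD m \<in> L")
      case True
      define L' where "L' = L - {LD m}"
      have L'C: "L' \<subseteq> C m" using L F by (auto simp: L'_def)
      have pL': "pairwise disjnt L'" using p by (auto simp: L'_def intro: pairwise_subset)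
      have "\<forall>y\<in>L'. disjnt (LD m) y" using p True by (auto simp: L'_def pairwise_def)
      hence "\<not> endD m L'" using disjD_all[OF L'C] by simp
      moreover have "L = insert (LD m) L'" using True by (auto simp: L'_def)
      ultimately show ?thesis using L'C pL' by (auto simp: TT_def)
    next
      case False
      with F L p show ?thesis by (auto simp: TT_def)
    qed
  qed
next
  fix L assume "L \<in> ?R"
  moreover have "C m \<subseteq> C (Suc m)" by (auto simp: C_Suc)
  moreover
  { fix L assume L: "L \<in> TT m" "\<not> endU m L"
    hence "\<forall>y\<in>L. disjnt (LU m) y" using disjU_all[of L m] by (auto simp: TT_def)
    hence "insert (LU m) L \<in> TT (Suc m)" using L
      by (auto simp: TT_def C_Suc pairwise_insert disjnt_sym) }
  moreover
  { fix L assume L: "L \<in> TT m" "\<not> endD m L"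
    hence "\<forall>y\<in>L. disjnt (LD m) y" using disjD_all[of L m] by (auto simp: TT_def)
    hence "insert (LD m) L \<in> TT (Suc m)" using L
      by (auto simp: TT_def C_Suc pairwise_insert disjnt_sym) }
  ultimately show "L \<in> TT (Suc m)" by (auto simp: TT_def)
qed

lemma ins_counts:
  assumes "finite X" "\<And>L. L\<in>X \<Longrightarrow> finite L \<and> x \<notin> L"
  shows "card (insert x ` X) = card X" "sum card (insert x ` X) = sum card X + card X"
proof -
  have inj: "inj_on (insert x) X"
    by (rule inj_onI) (metis assms(2) insert_ident)
  show "card (insert x ` X) = card X" using card_image[OF inj] .
  have "sum card (insert x ` X) = (\<Sum>L\<in>X. card (insert x L))" using sum.reindex[OF inj] by simp
  also have "\<dots> = (\<Sum>L\<in>X. card L + 1)" using assms(2) by (intro sum.cong) auto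
  also have "\<dots> = sum card X + card X" by (subst sum.distrib) simp
  finally show "sum card (insert x ` X) = sum card X + card X" .
qed

lemma TU_Suc: "{L\<in>TT (Suc m). endU (Suc m) L} = insert (LU m) ` {L\<in>TT m. \<not> endU m L}"
proof -
  have "{L\<in>TT (Suc m). endU (Suc m) L} = {L\<in>TT (Suc m). LU m \<in> L}" by (auto simp: endU_def)
  also have "\<dots> = insert (LU m) ` {L\<in>TT m. \<not> endU m L}"
  proof (intro equalityI subsetI)
    fix L assume L: "L \<in> {L\<in>TT (Suc m). LU m \<in> L}"
    hence "L \<in> TT m \<union> insert (LU m) ` {L\<in>TT m. \<not> endU m L}
      \<union> insert (LD m) ` {L\<in>TT m. \<not> endD m L}" using TT_Suc by blast
    moreover have "L \<notin> TT m" using L LU_notin_C by (auto simp: TT_def)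
    moreover have "L \<notin> insert (LD m) ` {L\<in>TT m. \<not> endD m L}"
    proof
      assume "L \<in> insert (LD m) ` {L\<in>TT m. \<not> endD m L}"
      then obtain L0 where "L0 \<in> TT m" "L = insert (LD m) L0" by auto
      thus False using L LU_notin_C by (auto simp: TT_def)
    qed
    ultimately show "L \<in> insert (LU m) ` {L\<in>TT m. \<not> endU m L}" by blast
  next
    fix L assume "L \<in> insert (LU m) ` {L\<in>TT m. \<not> endU m L}"
    thus "L \<in> {L\<in>TT (Suc m). LU m \<in> L}" using TT_Suc by blast
  qed
  finally show ?thesis .
qed

lemma TD_Suc: "{L\<in>TT (Suc m). endD (Suc m) L} = insert (LD m) ` {L\<in>TT m. \<not> endD m L}"
proof -
  have "{L\<in>TT (Suc m). endD (Suc m) L} = {L\<in>TT (Suc m). LD m \<in> L}" by (auto simp: endD_def)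
  also have "\<dots> = insert (LD m) ` {L\<in>TT m. \<not> endD m L}"
  proof (intro equalityI subsetI)
    fix L assume L: "L \<in> {L\<in>TT (Suc m). LD m \<in> L}"
    hence "L \<in> TT m \<union> insert (LU m) ` {L\<in>TT m. \<not> endU m L}
      \<union> insert (LD m) ` {L\<in>TT m. \<not> endD m L}" using TT_Suc by blast
    moreover have "L \<notin> TT m" using L LD_notin_C by (auto simp: TT_def)
    moreover have "L \<notin> insert (LU m) ` {L\<in>TT m. \<not> endU m L}"
    proof
      assume "L \<in> insert (LU m) ` {L\<in>TT m. \<not> endU m L}"
      then obtain L0 where "L0 \<in> TT m" "L = insert (LU m) L0" by auto
      thus False using L LD_notin_C by (auto simp: TT_def)
    qed
    ultimately show "L \<in> insert (LD m) ` {L\<in>TT m. \<not> endD m L}" by blast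
  next
    fix L assume "L \<in> insert (LD m) ` {L\<in>TT m. \<not> endD m L}"
    thus "L \<in> {L\<in>TT (Suc m). LD m \<in> L}" using TT_Suc by blast
  qed
  finally show ?thesis .
qed



lemma split_counts:
  assumes "finite A"
  shows "card A = card {x\<in>A. Q x} + card {x\<in>A. \<not> Q x}"
        "sum f A = sum f {x\<in>A. Q x} + sum f {x\<in>A. \<not> Q x}"
proof -
  have e: "A = {x\<in>A. Q x} \<union> {x\<in>A. \<not> Q x}" by auto
  have f: "finite {x\<in>A. Q x}" "finite {x\<in>A. \<not> Q x}" using assms by auto
  show "card A = card {x\<in>A. Q x} + card {x\<in>A. \<not> Q x}"
  proof -
    have "card ({x\<in>A. Q x} \<union> {x\<in>A. \<not> Q x}) = card {x\<in>A. Q x} + card {x\<in>A. \<not> Q x}"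
      by (rule card_Un_disjoint[OF f]) auto
    thus ?thesis by (simp only: e[symmetric])
  qed
  show "sum f A = sum f {x\<in>A. Q x} + sum f {x\<in>A. \<not> Q x}"
  proof -
    have "sum f ({x\<in>A. Q x} \<union> {x\<in>A. \<not> Q x}) = sum f {x\<in>A. Q x} + sum f {x\<in>A. \<not> Q x}"
      by (rule sum.union_disjoint[OF f]) auto
    thus ?thesis by (simp only: e[symmetric])
  qed
qed

lemma ins_TT:
  assumes "x \<notin> C m"
  shows "card (insert x ` {L\<in>TT m. Q L}) = card {L\<in>TT m. Q L}"
        "sum card (insert x ` {L\<in>TT m. Q L}) = sum card {L\<in>TT m. Q L} + card {L\<in>TT m. Q L}"
proof -
  have fin: "finite {L\<in>TT m. Q L}" using finite_TT[of m] by auto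
  have h: "\<And>L. L \<in> {L\<in>TT m. Q L} \<Longrightarrow> finite L \<and> x \<notin> L"
    using TT_finite_mem assms by (auto simp: TT_def)
  show "card (insert x ` {L\<in>TT m. Q L}) = card {L\<in>TT m. Q L}"
    by (rule ins_counts(1)[OF fin h])
  show "sum card (insert x ` {L\<in>TT m. Q L}) = sum card {L\<in>TT m. Q L} + card {L\<in>TT m. Q L}"
    by (rule ins_counts(2)[OF fin h])
qed

lemma TT_Suc_counts:
  "card (TT (Suc m)) = card (TT m) + card {L\<in>TT m. \<not> endU m L} + card {L\<in>TT m. \<not> endD m L}"
  "sum card (TT (Suc m)) = sum card (TT m) + (sum card {L\<in>TT m. \<not> endU m L} + card {L\<in>TT m. \<not> endU m L})
     + (sum card {L\<in>TT m. \<not> endD m L} + card {L\<in>TT m. \<not> endD m L})"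
proof -
  let ?A = "TT m" and ?B = "insert (LU m) ` {L\<in>TT m. \<not> endU m L}"
    and ?D = "insert (LD m) ` {L\<in>TT m. \<not> endD m L}"
  have fA: "finite ?A" by (rule finite_TT)
  have fB: "finite ?B" "finite ?D" using finite_TT by auto
  have d1: "?A \<inter> ?B = {}" using LU_notin_C by (auto simp: TT_def)
  have nD: "\<forall>L\<in>?D. LU m \<notin> L" using LU_notin_C by (auto simp: TT_def)
  have nA: "\<forall>L\<in>?A. LU m \<notin> L" using LU_notin_C by (auto simp: TT_def)
  have inB: "\<forall>L\<in>?B. LU m \<in> L" by auto
  have inD: "\<forall>L\<in>?D. LD m \<in> L" by auto
  have nAD: "\<forall>L\<in>?A. LD m \<notin> L" using LD_notin_C by (auto simp: TT_def)
  have d2: "(?A \<union> ?B) \<inter> ?D = {}"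
  proof (rule equals0I)
    fix L assume LL: "L \<in> (?A \<union> ?B) \<inter> ?D"
    hence L: "L \<in> ?A \<union> ?B" by (rule IntD1)
    have L2: "L \<in> ?D" using LL by (rule IntD2)
    show False
    proof -
      note L2
      have "LU m \<notin> L" using bspec[OF nD L2] .
      moreover have "LD m \<in> L" using bspec[OF inD L2] .
      moreover have "L \<in> ?A \<or> L \<in> ?B" using L by (rule UnE) simp_all
      ultimately show False using bspec[OF nAD] bspec[OF inB] by blast
    qed
  qed
  have cB: "card ?B = card {L\<in>TT m. \<not> endU m L}"
           "sum card ?B = sum card {L\<in>TT m. \<not> endU m L} + card {L\<in>TT m. \<not> endU m L}"
    using ins_TT[OF LU_notin_C] by auto
  have cD: "card ?D = card {L\<in>TT m. \<not> endD m L}"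
           "sum card ?D = sum card {L\<in>TT m. \<not> endD m L} + card {L\<in>TT m. \<not> endD m L}"
    using ins_TT[OF LD_notin_C] by auto
  have fAB: "finite (?A \<union> ?B)" using fA fB by simp
  have "card (TT (Suc m)) = card (?A \<union> ?B) + card ?D"
    unfolding TT_Suc by (rule card_Un_disjoint[OF fAB fB(2) d2])
  also have "card (?A \<union> ?B) = card ?A + card ?B" by (rule card_Un_disjoint[OF fA fB(1) d1])
  finally show "card (TT (Suc m)) = card (TT m) + card {L\<in>TT m. \<not> endU m L} + card {L\<in>TT m. \<not> endD m L}"
    using cB(1) cD(1) by simp
  have "sum card (TT (Suc m)) = sum card (?A \<union> ?B) + sum card ?D"
    unfolding TT_Suc by (rule sum.union_disjoint[OF fAB fB(2) d2])
  also have "sum card (?A \<union> ?B) = sum card ?A + sum card ?B" by (rule sum.union_disjoint[OF fA fB(1) d1])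
  finally show "sum card (TT (Suc m)) = sum card (TT m) + (sum card {L\<in>TT m. \<not> endU m L} + card {L\<in>TT m. \<not> endU m L})
     + (sum card {L\<in>TT m. \<not> endD m L} + card {L\<in>TT m. \<not> endD m L})"
    using cB(2) cD(2) by simp
qed

lemma TT_0: "TT 0 = {{}}" by (auto simp: TT_def C_def)

lemma alg3: fixes s su t u m :: real
  assumes "2*s = m*t+u" "2*su = (m+1)*u"
  shows "2*(s + ((s-su) + (t-u)) + ((s-su)+(t-u))) = (m+1)*(t + (t-u) + (t-u)) + (t-u)"
proof -
  have a: "s = (m*t+u)/2" "su = (m+1)*u/2" using assms by auto
  show ?thesis unfolding a by (simp add: field_simps)
qed
lemma alg4: fixes s su t u m :: real
  assumes "2*s = m*t+u" "2*su = (m+1)*u"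
  shows "2*((s-su) + (t-u)) = (m+1+1)*(t-u)"
proof -
  have a: "s = (m*t+u)/2" "su = (m+1)*u/2" using assms by auto
  show ?thesis unfolding a by (simp add: field_simps)
qed

lemma main_counts:
  fixes m :: nat
  defines "t \<equiv> real (card (TT m))" and "u \<equiv> real (card {L\<in>TT m. endU m L})"
    and "d \<equiv> real (card {L\<in>TT m. endD m L})"
    and "s \<equiv> real (sum card (TT m))" and "su \<equiv> real (sum card {L\<in>TT m. endU m L})"
    and "sd \<equiv> real (sum card {L\<in>TT m. endD m L})"
  shows "u = d \<and> su = sd \<and> 2 * s = real m * t + u \<and> 2 * su = (real m + 1) * u"
  unfolding t_def u_def d_def s_def su_def sd_def
proof (induction m)
  case 0
  show ?case by (simp add: TT_0 endU_def endD_def)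
next
  case (Suc m)
  define t where "t = real (card (TT m))"
  define u where "u = real (card {L\<in>TT m. endU m L})"
  define d where "d = real (card {L\<in>TT m. endD m L})"
  define s where "s = real (sum card (TT m))"
  define su where "su = real (sum card {L\<in>TT m. endU m L})"
  define sd where "sd = real (sum card {L\<in>TT m. endD m L})"
  define nu where "nu = real (card {L\<in>TT m. \<not> endU m L})"
  define nd where "nd = real (card {L\<in>TT m. \<not> endD m L})"
  define snu where "snu = real (sum card {L\<in>TT m. \<not> endU m L})"
  define snd where "snd = real (sum card {L\<in>TT m. \<not> endD m L})"
  have IH: "u = d" "su = sd" "2 * s = real m * t + u" "2 * su = (real m + 1) * u"
    using Suc.IH unfolding t_def u_def d_def s_def su_def sd_def by auto
  have sp: "t = u + nu" "t = d + nd" "s = su + snu" "s = sd + snd"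
    using split_counts(1)[OF finite_TT[of m], where Q="endU m"] split_counts(1)[OF finite_TT[of m], where Q="endD m"] split_counts(2)[OF finite_TT[of m], where Q="endU m" and f=card] split_counts(2)[OF finite_TT[of m], where Q="endD m" and f=card]
    unfolding t_def u_def d_def s_def su_def sd_def nu_def nd_def snu_def snd_def
    by (simp_all only: of_nat_add[symmetric])
  have rec: "real (card (TT (Suc m))) = t + nu + nd"
    "real (sum card (TT (Suc m))) = s + (snu + nu) + (snd + nd)"
    using TT_Suc_counts[of m] unfolding t_def s_def nu_def nd_def snu_def snd_def
    by (simp_all only: of_nat_add[symmetric])
  have ru: "real (card {L\<in>TT (Suc m). endU (Suc m) L}) = nu"
    "real (sum card {L\<in>TT (Suc m). endU (Suc m) L}) = snu + nu"
    unfolding TU_Suc nu_def snu_def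
    using ins_TT[OF LU_notin_C, where Q="\<lambda>L. \<not> endU m L"] by (simp_all only: of_nat_add[symmetric])
  have rd: "real (card {L\<in>TT (Suc m). endD (Suc m) L}) = nd"
    "real (sum card {L\<in>TT (Suc m). endD (Suc m) L}) = snd + nd"
    unfolding TD_Suc nd_def snd_def
    using ins_TT[OF LD_notin_C, where Q="\<lambda>L. \<not> endD m L"] by (simp_all only: of_nat_add[symmetric])
  have e1: "nu = nd" using sp IH by linarith
  have e2: "snu + nu = snd + nd" using sp IH by linarith
  have nu': "nu = t - u" "snu = s - su" using sp by linarith+
  have x: "nu = t - u" "nd = t - u" "snu = s - su" "snd = s - su" using sp IH by linarith+
  have e3: "2 * (s + (snu + nu) + (snd + nd)) = real (Suc m) * (t + nu + nd) + nu"
    unfolding x using alg3[OF IH(3,4)] by (simp add: add.commute)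
  have e4: "2 * (snu + nu) = (real (Suc m) + 1) * nu"
    unfolding x using alg4[OF IH(3,4)] by (simp add: add.commute)
  show ?case using rec ru rd e1 e2 e3 e4 by simp
qed



lemma Fam_H: "Fam (H_region (Suc m)) = TT m"
  unfolding Fam_def TT_def using large_H[of _ m] by blast

lemma Fam_P: "Fam (P_region (Suc m)) = {L\<in>TT m. \<not> endU m L}"
  unfolding Fam_def TT_def endU_def using large_P[of _ m] by blast

lemma finP: "finite (P_region n)"
  using finH[of n] by (simp add: P_region_def)

theorem theorem6:
  fixes n :: nat
  assumes "n \<ge> 1"
  shows "real (q n) = 1/2 * real n * real (H n) - 1/2 * real (P n)
       \<and> real (r n) = 1/2 * real n * real (P n) - 1/2 * real (P n)
       \<and> 1/2 * real n * real (P n) - 1/2 * real (P n) = (real n - 1) / 2 * real (P n)"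
proof -
  obtain m where n: "n = Suc m" using assms by (cases n) auto
  define t where "t = real (card (TT m))"
  define u where "u = real (card {L\<in>TT m. endU m L})"
  define s where "s = real (sum card (TT m))"
  define su where "su = real (sum card {L\<in>TT m. endU m L})"
  define nu where "nu = real (card {L\<in>TT m. \<not> endU m L})"
  define snu where "snu = real (sum card {L\<in>TT m. \<not> endU m L})"
  have mc: "2 * s = real m * t + u" "2 * su = (real m + 1) * u"
    using main_counts[of m] unfolding t_def u_def s_def su_def by auto
  have sp: "t = u + nu" "s = su + snu"
    using split_counts(1)[OF finite_TT[of m], where Q="endU m"]
      split_counts(2)[OF finite_TT[of m], where Q="endU m" and f=card]
    unfolding t_def u_def s_def su_def nu_def snu_def
    by (simp_all only: of_nat_add[symmetric])
  have Hn: "real (H n) = t" unfolding H_def n t_def fam_counts(1)[OF finH] Fam_H ..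
  have qn: "real (q n) = s" unfolding q_def n s_def fam_counts(2)[OF finH] Fam_H ..
  have Pn: "real (P n) = nu" unfolding P_def n nu_def fam_counts(1)[OF finP] Fam_P ..
  have rn: "real (r n) = snu" unfolding r_def n snu_def fam_counts(2)[OF finP] Fam_P ..
  have a: "s = (real m * t + u)/2" "su = (real m + 1) * u / 2" using mc by auto
  have b: "nu = t - u" "snu = s - su" using sp by auto
  show ?thesis unfolding Hn qn Pn rn b unfolding a n of_nat_Suc by (simp add: field_simps)
qed


end
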